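(* Let $k<\omega$ and let $\mathcal E\subseteq\mathcal P(\omega)$ have the property that for every uncountable $X\subseteq\mathcal E$ there are uncountable $X_0,\dots,X_k\subseteq X$ with $\bigcap_{i\le k}\bigcup X_i$ finite. Let $\mathcal A=\{f_e:e\in\mathcal E\}$, where each $f_e$ is a function from $e$ to $\omega$ (viewed as a subset of $\omega\times\omega$). Then $\mathcal A$ has no uncountable $(k+1)$-near-Luzin subfamily: for every uncountable $\mathcal B\subseteq\mathcal A$ there are uncountable $\mathcal C_0,\dots,\mathcal C_k\subseteq\mathcal B$ with $\bigcap_{i\le k}\bigcup\mathcal C_i$ finite.
   Context: An uncountable family $\mathcal A$ is $(k+1)$-near-Luzin iff for all uncountable $\mathcal C_0,\dots,\mathcal C_k\subseteq\mathcal A$ the set $\bigcap_{i\le k}\bigcup\mathcal C_i$ is infinite. *)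

theory Defs
  imports Main "HOL-Library.Countable_Set"
begin

definition has_finite_witness :: "nat \<Rightarrow> 'a set set \<Rightarrow> bool" where
  "has_finite_witness k F \<longleftrightarrow>
     (\<exists>C :: nat \<Rightarrow> 'a set set. (\<forall>i\<le>k. C i \<subseteq> F \<and> uncountable (C i)) \<and>
        finite (\<Inter>i\<in>{..k}. \<Union>(C i)))"

definition near_luzin :: "nat \<Rightarrow> 'a set set \<Rightarrow> bool" where
  "near_luzin k A \<longleftrightarrow> uncountable A \<and>
     (\<forall>C :: nat \<Rightarrow> 'a set set. (\<forall>i\<le>k. C i \<subseteq> A \<and> uncountable (C i)) \<longrightarrow>
        infinite (\<Inter>i\<in>{..k}. \<Union>(C i)))"

definition is_fun_graph :: "nat set \<Rightarrow> (nat \<times> nat) set \<Rightarrow> bool" where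
  "is_fun_graph e g \<longleftrightarrow> (\<forall>x\<in>e. \<exists>!y. (x, y) \<in> g) \<and> (\<forall>p\<in>g. fst p \<in> e)"

end

theory Submission
  imports Defs
begin

lemma fiber_uncountable:
  assumes "uncountable C" "countable (g ` C)"
  shows "\<exists>s\<in>g ` C. uncountable (C \<inter> g -` {s})"
proof (rule ccontr)
  assume "\<not> ?thesis"
  hence "countable (\<Union>s\<in>g ` C. C \<inter> g -` {s})" using assms(2) by (intro countable_UN) auto
  moreover have "(\<Union>s\<in>g ` C. C \<inter> g -` {s}) = C" by auto
  ultimately show False using assms(1) by simp
qed

lemma fun_graph_dom: "is_fun_graph e g \<Longrightarrow> fst ` g = e"
  unfolding is_fun_graph_def by force

lemma fun_graph_fin:
  assumes "is_fun_graph e g" "finite F"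
  shows "finite (g \<inter> (F \<times> UNIV))"
proof (rule finite_imageD[of fst])
  show "finite (fst ` (g \<inter> (F \<times> UNIV)))" using assms(2)
    by (rule finite_subset[rotated]) auto
  show "inj_on fst (g \<inter> (F \<times> UNIV))"
  proof (rule inj_onI)
    fix p q assume p: "p \<in> g \<inter> (F \<times> UNIV)" and q: "q \<in> g \<inter> (F \<times> UNIV)" and eq: "fst p = fst q"
    have "fst p \<in> e" using p assms(1) unfolding is_fun_graph_def by auto
    then obtain y where "\<forall>y'. (fst p, y') \<in> g \<longrightarrow> y' = y" using assms(1) unfolding is_fun_graph_def by blast
    hence "snd p = y" "snd q = y" using p q eq by (metis IntD1 prod.collapse)+
    thus "p = q" using eq by (simp add: prod_eq_iff)
  qed
qed

theorem lemma5p6: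
  fixes k :: nat and E :: "nat set set" and f :: "nat set \<Rightarrow> (nat \<times> nat) set"
  assumes hE: "\<forall>X. X \<subseteq> E \<and> uncountable X \<longrightarrow> has_finite_witness k X"
    and hf: "\<forall>e\<in>E. is_fun_graph e (f e)"
  shows "(\<forall>B. B \<subseteq> f ` E \<and> uncountable B \<longrightarrow> has_finite_witness k B)
         \<and> \<not> (\<exists>B \<subseteq> f ` E. near_luzin k B)"
proof -
  have choice_le: "\<And>P Q. \<forall>i\<le>k. \<exists>s. P i s \<Longrightarrow> (\<And>s. \<forall>i\<le>k. P i (s i) \<Longrightarrow> Q) \<Longrightarrow> Q"
    by metis
  have injE: "inj_on f E"
  proof (rule inj_onI)
    fix x y assume "x \<in> E" "y \<in> E" "f x = f y"
    thus "x = y" using hf fun_graph_dom by metis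
  qed
  have main: "has_finite_witness k B" if B: "B \<subseteq> f ` E" "uncountable B" for B
  proof -
    define X where "X = E \<inter> f -` B"
    have "f ` X = B" using B(1) unfolding X_def by auto
    hence "uncountable X" using B(2) by auto
    then obtain C where C: "\<forall>i\<le>k. C i \<subseteq> X \<and> uncountable (C i)"
      and Cfin: "finite (\<Inter>i\<in>{..k}. \<Union>(C i))"
      using hE[rule_format, of X] unfolding has_finite_witness_def X_def by auto
    define F where "F = (\<Inter>i\<in>{..k}. \<Union>(C i))"
    define g where "g = (\<lambda>e. f e \<inter> (F \<times> UNIV))"
    have gfin: "finite (g e)" if "e \<in> E" for e
      unfolding g_def using fun_graph_fin[of e "f e" F] hf that Cfin unfolding F_def by auto
    have "\<forall>i\<le>k. \<exists>s. finite s \<and> uncountable (C i \<inter> g -` {s})"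
    proof (intro allI impI)
      fix i assume i: "i \<le> k"
      have "C i \<subseteq> E" using C i unfolding X_def by auto
      hence "g ` C i \<subseteq> {s. finite s}" using gfin by auto
      hence "countable (g ` C i)" by (rule countable_subset) (rule countable_Collect_finite)
      then obtain s where "s \<in> g ` C i" "uncountable (C i \<inter> g -` {s})"
        using fiber_uncountable[of "C i" g] C i by auto
      thus "\<exists>s. finite s \<and> uncountable (C i \<inter> g -` {s})" using \<open>g ` C i \<subseteq> {s. finite s}\<close> by auto
    qed
    then obtain s where s: "\<forall>i\<le>k. finite (s i) \<and> uncountable (C i \<inter> g -` {s i})" by (rule choice_le)
    define D where "D = (\<lambda>i. f ` (C i \<inter> g -` {s i}))"
    have D: "\<forall>i\<le>k. D i \<subseteq> B \<and> uncountable (D i)"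
    proof (intro allI impI conjI)
      fix i assume i: "i \<le> k"
      show "D i \<subseteq> B" using C i unfolding D_def X_def by auto
      have "C i \<inter> g -` {s i} \<subseteq> E" using C i unfolding X_def by auto
      hence "inj_on f (C i \<inter> g -` {s i})" using injE inj_on_subset by blast
      thus "uncountable (D i)" using s i unfolding D_def by (auto dest: countable_image_inj_on)
    qed
    have "(\<Inter>i\<in>{..k}. \<Union>(D i)) \<subseteq> s 0"
    proof
      fix p assume p: "p \<in> (\<Inter>i\<in>{..k}. \<Union>(D i))"
      have "fst p \<in> F" unfolding F_def
      proof (intro INT_I)
        fix i assume i: "i \<in> {..k}"
        then obtain e where e: "e \<in> C i" "p \<in> f e" using p unfolding D_def by auto
        have "e \<in> E" using e C i unfolding X_def by auto
        hence "fst p \<in> e" using hf e fun_graph_dom by blast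
        thus "fst p \<in> \<Union>(C i)" using e by auto
      qed
      moreover obtain e where e: "e \<in> C 0" "g e = s 0" "p \<in> f e" using p unfolding D_def by auto
      ultimately show "p \<in> s 0" unfolding g_def by (auto simp: mem_Times_iff)
    qed
    then have "finite (\<Inter>i\<in>{..k}. \<Union>(D i))" proof (rule finite_subset)
      show "finite (s 0)" using s by simp
    qed
    thus ?thesis unfolding has_finite_witness_def using D by blast
  qed
  show ?thesis
  proof
    show "\<forall>B. B \<subseteq> f ` E \<and> uncountable B \<longrightarrow> has_finite_witness k B" using main by blast
    show "\<not> (\<exists>B \<subseteq> f ` E. near_luzin k B)"
    proof
      assume "\<exists>B \<subseteq> f ` E. near_luzin k B"
      then obtain B where "B \<subseteq> f ` E" "near_luzin k B" by auto
      then show False using main[of B] unfolding near_luzin_def has_finite_witness_def by auto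
    qed
  qed
qed

end
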